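(* Let $A\in\{0,1\}$, $\varepsilon>0$, $c>\varepsilon$, and let $(R,W)$ be a solution of system (ODE) on $[\varepsilon,c)$ (with $R\in C^1$, $W\in C^2$) satisfying $$W(\varepsilon)<-1,\quad W'(\varepsilon)<0,\quad W''(\varepsilon)<0,\quad R(\varepsilon)>0.$$ Suppose $W(y)<-\frac13$ for all $y\in(\varepsilon,c)$ and $-2W(y)-R(y)>0$ for all $y\in(\varepsilon,c)$. Then $H(y):=W'(y)y+3W(y)+1<0$ for all $y\in(\varepsilon,c)$.
   Context: System (ODE) for $R(y),W(y)$, with $A\in\{0,1\}$: $R'(y)W(y)y=-R(y)\big(W'(y)y+3W(y)+1\big)$, $W''(y)W(y)y^2=\tfrac12(W(y)y)^2\big(W'(y)y+W(y)+1-R(y)\big)+(W'(y)y+1)^2+4W(y)+3W(y)^2-\tfrac A2\big(W'(y)y+3W(y)+1\big)$. *)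

theory Defs
  imports "HOL-Analysis.Analysis"
begin

end

theory Submission
  imports Defs
begin

theorem mainTheorem8:
  fixes R R1 W W1 W2 :: "real \<Rightarrow> real" and A \<epsilon> c :: real
  assumes hA: "A \<in> {0, 1}"
    and heps: "\<epsilon> > 0" and hc: "c > \<epsilon>"
    and hR: "\<And>y. y \<in> {\<epsilon>..<c} \<Longrightarrow> (R has_real_derivative R1 y) (at y within {\<epsilon>..<c})"
    and hR1: "continuous_on {\<epsilon>..<c} R1"
    and hW: "\<And>y. y \<in> {\<epsilon>..<c} \<Longrightarrow> (W has_real_derivative W1 y) (at y within {\<epsilon>..<c})"
    and hW1: "\<And>y. y \<in> {\<epsilon>..<c} \<Longrightarrow> (W1 has_real_derivative W2 y) (at y within {\<epsilon>..<c})"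
    and hW2: "continuous_on {\<epsilon>..<c} W2"
    and ode1: "\<And>y. y \<in> {\<epsilon>..<c} \<Longrightarrow>
       R1 y * W y * y = - R y * (W1 y * y + 3 * W y + 1)"
    and ode2: "\<And>y. y \<in> {\<epsilon>..<c} \<Longrightarrow>
       W2 y * W y * y^2 = 1/2 * (W y * y)^2 * (W1 y * y + W y + 1 - R y)
         + (W1 y * y + 1)^2 + 4 * W y + 3 * (W y)^2
         - A / 2 * (W1 y * y + 3 * W y + 1)"
    and init: "W \<epsilon> < -1" "W1 \<epsilon> < 0" "W2 \<epsilon> < 0" "R \<epsilon> > 0"
    and hWb: "\<And>y. y \<in> {\<epsilon><..<c} \<Longrightarrow> W y < -1/3"
    and hRW: "\<And>y. y \<in> {\<epsilon><..<c} \<Longrightarrow> -2 * W y - R y > 0"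
  shows "\<forall>y \<in> {\<epsilon><..<c}. W1 y * y + 3 * W y + 1 < 0"
proof (rule ccontr)
  define H where "H = (\<lambda>y. W1 y * y + 3 * W y + 1)"
  assume "\<not> (\<forall>y \<in> {\<epsilon><..<c}. W1 y * y + 3 * W y + 1 < 0)"
  then obtain y1 where y1: "y1 \<in> {\<epsilon><..<c}" "H y1 \<ge> 0" unfolding H_def by force
  have dH: "(H has_real_derivative (W2 y * y + W1 y + 3 * W1 y)) (at y within {\<epsilon>..<c})"
    if "y \<in> {\<epsilon>..<c}" for y
    unfolding H_def using hW[OF that] hW1[OF that]
    by (auto intro!: derivative_eq_intros)
  have contH: "continuous_on {\<epsilon>..<c} H" by (rule DERIV_continuous_on[OF dH])
  have He: "H \<epsilon> < 0"
  proof -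
    have "W1 \<epsilon> * \<epsilon> < 0" using init heps by (simp add: mult_neg_pos)
    then show ?thesis unfolding H_def using init by linarith
  qed
  have sub: "\<And>a b. \<epsilon> \<le> a \<Longrightarrow> b < c \<Longrightarrow> {a..b} \<subseteq> {\<epsilon>..<c}" by auto
  define T where "T = {\<epsilon>..y1} \<inter> H -` {0}"
  have cT: "closed T" unfolding T_def
    by (rule continuous_closed_preimage) (use continuous_on_subset[OF contH sub] y1 in auto)
  obtain z where z: "\<epsilon> \<le> z" "z \<le> y1" "H z = 0"
    using IVT'[of H \<epsilon> 0 y1] He y1 continuous_on_subset[OF contH sub[of \<epsilon> y1]] by auto
  have neT: "T \<noteq> {}" using z unfolding T_def by auto
  have bT: "bdd_below T" unfolding T_def by (rule bdd_belowI[of _ \<epsilon>]) auto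
  define y0 where "y0 = Inf T"
  have y0T: "y0 \<in> T" unfolding y0_def by (rule closed_contains_Inf[OF neT bT cT])
  have low: "\<And>t. t \<in> T \<Longrightarrow> y0 \<le> t" unfolding y0_def by (rule cInf_lower[OF _ bT])
  have Hy0: "H y0 = 0" and y0r: "\<epsilon> \<le> y0" "y0 \<le> y1" using y0T unfolding T_def by auto
  have y0e: "y0 \<noteq> \<epsilon>" using Hy0 He by auto
  have y0i: "y0 \<in> {\<epsilon><..<c}" using y0r y0e y1 by auto
  have y0pos: "y0 > 0" using y0i heps by auto
  have Wn: "W y0 < -1/3" using hWb[OF y0i] .
  have RW: "-2 * W y0 - R y0 > 0" using hRW[OF y0i] .
  define D where "D = W2 y0 * y0 + W1 y0 + 3 * W1 y0"
  have e1: "W1 y0 * y0 = - 3 * W y0 - 1" using Hy0 unfolding H_def by linarith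
  have o2: "W2 y0 * W y0 * y0^2 = 1/2 * (W y0 * y0)^2 * (-2 * W y0 - R y0) + 12 * (W y0)^2 + 4 * W y0"
  proof -
    have a: "W1 y0 * y0 + 1 = - 3 * W y0" using e1 by linarith
    have b: "W1 y0 * y0 + W y0 + 1 - R y0 = -2 * W y0 - R y0" using e1 by linarith
    have c0: "W1 y0 * y0 + 3 * W y0 + 1 = 0" using e1 by linarith
    show ?thesis using ode2[of y0] y0i unfolding a b c0 by (simp add: power2_eq_square algebra_simps)
  qed
  have key: "W y0 * (D * y0) = 1/2 * (W y0 * y0)^2 * (-2 * W y0 - R y0)"
  proof -
    have "W y0 * (D * y0) = W2 y0 * W y0 * y0^2 + 4 * W y0 * (W1 y0 * y0)"
      unfolding D_def by (simp add: power2_eq_square algebra_simps)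
    also have "\<dots> = 1/2 * (W y0 * y0)^2 * (-2 * W y0 - R y0)"
      unfolding o2 e1 by (simp add: power2_eq_square algebra_simps)
    finally show ?thesis .
  qed
  have "(W y0 * y0)^2 > 0" using Wn y0pos by simp
  then have "W y0 * (D * y0) > 0" unfolding key using RW by simp
  then have "D * y0 < 0" using Wn by (simp add: zero_less_mult_iff)
  then have Dn: "D < 0" using y0pos by (simp add: mult_less_0_iff)
  have "(H has_real_derivative D) (at y0 within {\<epsilon><..<c})"
    unfolding D_def by (rule has_field_derivative_subset[OF dH]) (use y0i in auto)
  then have "(H has_real_derivative D) (at y0)"
    using at_within_open[OF y0i open_greaterThanLessThan] by simp
  from DERIV_neg_dec_left[OF this Dn] obtain d where d: "d > 0"
    "\<And>h. h > 0 \<Longrightarrow> h < d \<Longrightarrow> H y0 < H (y0 - h)" by blast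
  define h where "h = min (d/2) ((y0 - \<epsilon>)/2)"
  have hp: "h > 0" "h < d" using d y0i unfolding h_def by auto
  have Hp: "H (y0 - h) > 0" using d(2)[OF hp] Hy0 by simp
  have "h \<le> (y0 - \<epsilon>)/2" unfolding h_def by (rule min.cobounded2)
  then have he: "\<epsilon> \<le> y0 - h" using y0i by auto
  have hc2: "y0 - h < c" using y0i hp by auto
  obtain z2 where z2: "\<epsilon> \<le> z2" "z2 \<le> y0 - h" "H z2 = 0"
    using IVT'[of H \<epsilon> 0 "y0 - h"] He Hp he continuous_on_subset[OF contH sub[of \<epsilon> "y0 - h", OF order.refl hc2]]
    by auto
  have "z2 \<in> T" unfolding T_def using z2 hp y0r by auto
  from low[OF this] z2 hp show False by linarith
qed

end
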